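(* Let $\phi:R_1\to R_2^\varepsilon$ and $\psi:R_2\to R_1^\varepsilon$ define an $\varepsilon$-interleaving between Reeb graphs $R_1,R_2$. Let $v$ be a split node or a maximum of $R_1$, let $v'=s(v)\in R_1^\varepsilon$, and let $z$ be a split node or a maximum of $R_2^\varepsilon$. Let $M^-_\varepsilon(z)\subset R_2^\varepsilon$ be the set of points $x$ connected to $z$ by a monotone path $Q_x$ of height at most $2\varepsilon$ with $f_2^\varepsilon(q)\le f_2^\varepsilon(z)$ for all $q\in Q_x$. If $\phi(v)\in M^-_\varepsilon(z)$, then $\phi^\varepsilon(v')\in P^\varepsilon(z)\subset R_2^{2\varepsilon}$. Symmetrically, if $v$ is a join node or minimum of $R_1$, $z$ a join node or minimum of $R_2^\varepsilon$, $M^+_\varepsilon(z)$ the set of points connected to $z$ by a monotone path of height at most $2\varepsilon$ lying entirely at or above $f_2^\varepsilon(z)$, and $\phi(v)\in M^+_\varepsilon(z)$, then $\phi^\varepsilon(s(v))\in P^\varepsilon(z)$.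
   Context: A Reeb graph $R=(G,f)$ is a finite multigraph $G$ (identified with its geometric realization) with a continuous $f$ strictly monotone on each edge and injective on nodes. Split node: up-degree $>1$, down-degree $1$; join node: up-degree $1$, down-degree $>1$; maximum: up-degree $0$, down-degree $1$; minimum: up-degree $1$, down-degree $0$ (degenerate nodes are treated as superpositions of such nodes joined by zero-length edges). A morphism is a continuous function-preserving map. The height of a path is the difference between the maximum and minimum of $f$ on it; a path is monotone if $f$ is monotone along it. For $\varepsilon\ge0$, $\mathcal T^\varepsilon(R)=G\times[-\varepsilon,\varepsilon]$ with $F^\varepsilon(x,t)=f(x)+t$; $R^\varepsilon$ is the Reeb graph of $(\mathcal T^\varepsilon(R),F^\varepsilon)$ with quotient map $\pi$ and function $f^\varepsilon$; $(R^\varepsilon)^\delta$ is identified with $R^{\varepsilon+\delta}$. The shift is $\eta(x)=\pi(x,0)$, and $\eta^{2\varepsilon}:R\to R^{2\varepsilon}$ the $2\varepsilon$-shift. For a morphism $\phi:R_1\to R_2^\varepsilon$, $\phi^\delta:R_1^\delta\to R_2^{\varepsilon+\delta}$ is induced by $(x,t)\mapsto(\phi(x),t)$ on thickenings. An $\varepsilon$-interleaving is a pair $\phi:R_1\to R_2^\varepsilon$, $\psi:R_2\to R_1^\varepsilon$ with $\phi^\varepsilon\circ\psi=\eta_2^{2\varepsilon}$, $\psi^\varepsilon\circ\phi=\eta_1^{2\varepsilon}$. For $x\in R$, $P^\varepsilon(x)=\pi(\{x\}\times[-\varepsilon,\varepsilon])\subset R^\varepsilon$. For a maximum or split node $v$,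 $s(v)=\pi(v,\varepsilon)$; for a minimum or join node, $s(v)=\pi(v,-\varepsilon)$. *)

theory Defs
  imports "HOL-Analysis.Analysis"
begin

definition qtop :: "'a topology \<Rightarrow> ('a \<Rightarrow> 'b) \<Rightarrow> 'b topology" where
  "qtop X p = topology (\<lambda>U. U \<subseteq> p ` topspace X \<and> openin X {x \<in> topspace X. p x \<in> U})"

lemma istopology_qtop:
  "istopology (\<lambda>U. U \<subseteq> p ` topspace X \<and> openin X {x \<in> topspace X. p x \<in> U})"
proof -
  have 1: "{x \<in> topspace X. p x \<in> S \<inter> T} = {x \<in> topspace X. p x \<in> S} \<inter> {x \<in> topspace X. p x \<in> T}" for S T
    by auto
  have 2: "{x \<in> topspace X. p x \<in> \<Union>K} = \<Union>((\<lambda>U. {x \<in> topspace X. p x \<in> U}) ` K)" for K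
    by auto
  show ?thesis
    unfolding istopology_def 1 2 by auto
qed

text \<open>An interior
point of an edge is identified by its function value.\<close>

datatype rpt = Nd nat | Ed nat real

definition mgraph :: "nat set \<Rightarrow> nat set \<Rightarrow> (nat \<Rightarrow> nat) \<Rightarrow> (nat \<Rightarrow> nat) \<Rightarrow> (nat \<Rightarrow> real) \<Rightarrow> bool" where
  "mgraph V E lo hi fv \<longleftrightarrow> finite V \<and> finite E \<and> inj_on fv V \<and>
     (\<forall>e\<in>E. lo e \<in> V \<and> hi e \<in> V \<and> fv (lo e) < fv (hi e))"

definition rpoints :: "nat set \<Rightarrow> nat set \<Rightarrow> (nat \<Rightarrow> nat) \<Rightarrow> (nat \<Rightarrow> nat) \<Rightarrow> (nat \<Rightarrow> real) \<Rightarrow> rpt set" where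
  "rpoints V E lo hi fv = Nd ` V \<union> {Ed e h | e h. e \<in> E \<and> fv (lo e) < h \<and> h < fv (hi e)}"

definition remb :: "(nat \<Rightarrow> nat) \<Rightarrow> (nat \<Rightarrow> nat) \<Rightarrow> (nat \<Rightarrow> real) \<Rightarrow> nat \<Rightarrow> real \<Rightarrow> rpt" where
  "remb lo hi fv e h = (if h = fv (lo e) then Nd (lo e) else if h = fv (hi e) then Nd (hi e) else Ed e h)"

text \<open>Topology of the geometric realization: a set is open iff its preimage in every
closed edge interval is open (the usual CW/quotient topology).\<close>

definition rtop :: "nat set \<Rightarrow> nat set \<Rightarrow> (nat \<Rightarrow> nat) \<Rightarrow> (nat \<Rightarrow> nat) \<Rightarrow> (nat \<Rightarrow> real) \<Rightarrow> rpt topology" where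
  "rtop V E lo hi fv = topology (\<lambda>U. U \<subseteq> rpoints V E lo hi fv \<and>
     (\<forall>e\<in>E. openin (top_of_set {fv (lo e)..fv (hi e)})
                 {h \<in> {fv (lo e)..fv (hi e)}. remb lo hi fv e h \<in> U}))"

fun rfun :: "(nat \<Rightarrow> real) \<Rightarrow> rpt \<Rightarrow> real" where
  "rfun fv (Nd v) = fv v"
| "rfun fv (Ed e h) = h"

definition is_reeb_graph :: "'a topology \<Rightarrow> ('a \<Rightarrow> real) \<Rightarrow> bool" where
  "is_reeb_graph X f \<longleftrightarrow> (\<exists>V E lo hi fv h. mgraph V E lo hi fv \<and>
      homeomorphic_map (rtop V E lo hi fv) X h \<and>
      (\<forall>p\<in>rpoints V E lo hi fv. f (h p) = rfun fv p))"

definition reeb_cls :: "'a topology \<Rightarrow> ('a \<Rightarrow> real) \<Rightarrow> 'a \<Rightarrow> 'a set" where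
  "reeb_cls T F p = connected_component_of_set (subtopology T {q \<in> topspace T. F q = F p}) p"

definition reeb_top :: "'a topology \<Rightarrow> ('a \<Rightarrow> real) \<Rightarrow> 'a set topology" where
  "reeb_top T F = qtop T (reeb_cls T F)"

definition reeb_fun :: "('a \<Rightarrow> real) \<Rightarrow> 'a set \<Rightarrow> real" where
  "reeb_fun F c = F (SOME p. p \<in> c)"

definition thick_top :: "'a topology \<Rightarrow> real \<Rightarrow> ('a \<times> real) topology" where
  "thick_top X \<epsilon> = prod_topology X (top_of_set {-\<epsilon>..\<epsilon>})"

definition thick_fun :: "('a \<Rightarrow> real) \<Rightarrow> 'a \<times> real \<Rightarrow> real" where
  "thick_fun f = (\<lambda>(x, t). f x + t)"

definition sm_top :: "'a topology \<Rightarrow> ('a \<Rightarrow> real) \<Rightarrow> real \<Rightarrow> ('a \<times> real) set topology" where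
  "sm_top X f \<epsilon> = reeb_top (thick_top X \<epsilon>) (thick_fun f)"

definition sm_fun :: "('a \<Rightarrow> real) \<Rightarrow> ('a \<times> real) set \<Rightarrow> real" where
  "sm_fun f = reeb_fun (thick_fun f)"

definition sm_pi :: "'a topology \<Rightarrow> ('a \<Rightarrow> real) \<Rightarrow> real \<Rightarrow> 'a \<times> real \<Rightarrow> ('a \<times> real) set" where
  "sm_pi X f \<epsilon> = reeb_cls (thick_top X \<epsilon>) (thick_fun f)"

definition reeb_morphism :: "'a topology \<Rightarrow> ('a \<Rightarrow> real) \<Rightarrow> 'b topology \<Rightarrow> ('b \<Rightarrow> real) \<Rightarrow> ('a \<Rightarrow> 'b) \<Rightarrow> bool" where
  "reeb_morphism X1 f1 X2 f2 g \<longleftrightarrow> continuous_map X1 X2 g \<and> (\<forall>x\<in>topspace X1. f2 (g x) = f1 x)"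

text \<open>For phi : R_1 -> R_2^eps, phi^delta : R_1^delta -> R_2^(eps+delta), induced by
(x,t) |-> (phi x, t) followed by the identification (R_2^eps)^delta = R_2^(eps+delta),
pi_delta(pi_eps(y,s), t) |-> pi_(eps+delta)(y, s+t).\<close>

definition sm_map :: "'b topology \<Rightarrow> ('b \<Rightarrow> real) \<Rightarrow> real \<Rightarrow> real \<Rightarrow> ('a \<Rightarrow> ('b \<times> real) set)
    \<Rightarrow> ('a \<times> real) set \<Rightarrow> ('b \<times> real) set" where
  "sm_map X2 f2 \<epsilon> \<delta> \<phi> c =
     (let (x, t) = (SOME xt. xt \<in> c); (y, s) = (SOME ys. ys \<in> \<phi> x)
      in sm_pi X2 f2 (\<epsilon> + \<delta>) (y, s + t))"

definition interleaving ::
  "'a topology \<Rightarrow> ('a \<Rightarrow> real) \<Rightarrow> 'b topology \<Rightarrow> ('b \<Rightarrow> real) \<Rightarrow> real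
    \<Rightarrow> ('a \<Rightarrow> ('b \<times> real) set) \<Rightarrow> ('b \<Rightarrow> ('a \<times> real) set) \<Rightarrow> bool" where
  "interleaving X1 f1 X2 f2 \<epsilon> \<phi> \<psi> \<longleftrightarrow>
     reeb_morphism X1 f1 (sm_top X2 f2 \<epsilon>) (sm_fun f2) \<phi> \<and>
     reeb_morphism X2 f2 (sm_top X1 f1 \<epsilon>) (sm_fun f1) \<psi> \<and>
     (\<forall>y\<in>topspace X2. sm_map X2 f2 \<epsilon> \<epsilon> \<phi> (\<psi> y) = sm_pi X2 f2 (2*\<epsilon>) (y, 0)) \<and>
     (\<forall>x\<in>topspace X1. sm_map X1 f1 \<epsilon> \<epsilon> \<psi> (\<phi> x) = sm_pi X1 f1 (2*\<epsilon>) (x, 0))"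

definition up_star :: "'a topology \<Rightarrow> ('a \<Rightarrow> real) \<Rightarrow> 'a \<Rightarrow> real \<Rightarrow> 'a set" where
  "up_star X f x \<delta> = connected_component_of_set
     (subtopology X {y \<in> topspace X. f x \<le> f y \<and> f y < f x + \<delta>}) x"

definition down_star :: "'a topology \<Rightarrow> ('a \<Rightarrow> real) \<Rightarrow> 'a \<Rightarrow> real \<Rightarrow> 'a set" where
  "down_star X f x \<delta> = connected_component_of_set
     (subtopology X {y \<in> topspace X. f x - \<delta> < f y \<and> f y \<le> f x}) x"

definition updeg :: "'a topology \<Rightarrow> ('a \<Rightarrow> real) \<Rightarrow> 'a \<Rightarrow> nat" where
  "updeg X f x = (THE n. \<forall>\<^sub>F \<delta> in at_right 0.
      card (connected_components_of (subtopology X (up_star X f x \<delta> - {x}))) = n)"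

definition downdeg :: "'a topology \<Rightarrow> ('a \<Rightarrow> real) \<Rightarrow> 'a \<Rightarrow> nat" where
  "downdeg X f x = (THE n. \<forall>\<^sub>F \<delta> in at_right 0.
      card (connected_components_of (subtopology X (down_star X f x \<delta> - {x}))) = n)"

text \<open>Degenerate nodes are superpositions of non-degenerate ones; so a point has a
split-or-maximum part iff its up-degree is not 1, and a join-or-minimum part iff its
down-degree is not 1.\<close>

definition split_or_max :: "'a topology \<Rightarrow> ('a \<Rightarrow> real) \<Rightarrow> 'a \<Rightarrow> bool" where
  "split_or_max X f v \<longleftrightarrow> v \<in> topspace X \<and> updeg X f v \<noteq> 1"

definition join_or_min :: "'a topology \<Rightarrow> ('a \<Rightarrow> real) \<Rightarrow> 'a \<Rightarrow> bool" where
  "join_or_min X f v \<longleftrightarrow> v \<in> topspace X \<and> downdeg X f v \<noteq> 1"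

definition path_height :: "('a \<Rightarrow> real) \<Rightarrow> (real \<Rightarrow> 'a) \<Rightarrow> real" where
  "path_height f g = (SUP t\<in>{0..1}. f (g t)) - (INF t\<in>{0..1}. f (g t))"

definition monotone_path :: "'a topology \<Rightarrow> ('a \<Rightarrow> real) \<Rightarrow> (real \<Rightarrow> 'a) \<Rightarrow> bool" where
  "monotone_path X f g \<longleftrightarrow> pathin X g \<and>
     (mono_on {0..1} (f \<circ> g) \<or> antimono_on {0..1} (f \<circ> g))"

definition Mminus :: "'a topology \<Rightarrow> ('a \<Rightarrow> real) \<Rightarrow> real \<Rightarrow> 'a \<Rightarrow> 'a set" where
  "Mminus X f \<epsilon> z = {x. \<exists>g. monotone_path X f g \<and> g 0 = x \<and> g 1 = z \<and>
       path_height f g \<le> 2*\<epsilon> \<and> (\<forall>t\<in>{0..1}. f (g t) \<le> f z)}"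

definition Mplus :: "'a topology \<Rightarrow> ('a \<Rightarrow> real) \<Rightarrow> real \<Rightarrow> 'a \<Rightarrow> 'a set" where
  "Mplus X f \<epsilon> z = {x. \<exists>g. monotone_path X f g \<and> g 0 = x \<and> g 1 = z \<and>
       path_height f g \<le> 2*\<epsilon> \<and> (\<forall>t\<in>{0..1}. f z \<le> f (g t))}"

text \<open>For z in R_2^eps, P^eps(z) = pi({z} x [-eps,eps]) in (R_2^eps)^eps = R_2^(2 eps).\<close>

definition Pset :: "'b topology \<Rightarrow> ('b \<Rightarrow> real) \<Rightarrow> real \<Rightarrow> ('b \<times> real) set \<Rightarrow> ('b \<times> real) set set" where
  "Pset X2 f2 \<epsilon> z = {sm_pi X2 f2 (2*\<epsilon>) (y, s + t) | y s t. (y, s) \<in> z \<and> t \<in> {-\<epsilon>..\<epsilon>}}"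

definition s_up :: "'a topology \<Rightarrow> ('a \<Rightarrow> real) \<Rightarrow> real \<Rightarrow> 'a \<Rightarrow> ('a \<times> real) set" where
  "s_up X f \<epsilon> v = sm_pi X f \<epsilon> (v, \<epsilon>)"

definition s_down :: "'a topology \<Rightarrow> ('a \<Rightarrow> real) \<Rightarrow> real \<Rightarrow> 'a \<Rightarrow> ('a \<times> real) set" where
  "s_down X f \<epsilon> v = sm_pi X f \<epsilon> (v, -\<epsilon>)"

end

theory Submission
  imports Defs
begin



lemma qtop_open: "openin (qtop X p) U \<longleftrightarrow> U \<subseteq> p ` topspace X \<and> openin X {x \<in> topspace X. p x \<in> U}"
  unfolding qtop_def by (simp add: topology_inverse'[OF istopology_qtop])

lemma qtop_space: "topspace (qtop X p) = p ` topspace X"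
proof -
  have e: "{x \<in> topspace X. p x \<in> p ` topspace X} = topspace X" by auto
  have "openin (qtop X p) (p ` topspace X)" by (simp add: qtop_open e)
  moreover have "openin (qtop X p) U \<Longrightarrow> U \<subseteq> p ` topspace X" for U by (simp add: qtop_open)
  ultimately show ?thesis by (metis openin_subset openin_topspace subset_antisym)
qed

lemma rc_self: "p \<in> topspace T \<Longrightarrow> p \<in> reeb_cls T F p"
  unfolding reeb_cls_def by (simp add: connected_component_of_refl)

lemma rc_sub: "reeb_cls T F p \<subseteq> {q \<in> topspace T. F q = F p}"
  unfolding reeb_cls_def
  using connected_component_of_subset_topspace[of "subtopology T {q \<in> topspace T. F q = F p}" p]
  by (simp add: topspace_subtopology)

lemma rc_conn: "connectedin T (reeb_cls T F p)"
  unfolding reeb_cls_def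
  by (rule connectedin_subtopology[THEN iffD1, THEN conjunct1, OF connectedin_connected_component_of])

lemma rc_eq: "q \<in> reeb_cls T F p \<Longrightarrow> reeb_cls T F q = reeb_cls T F p"
proof -
  assume q: "q \<in> reeb_cls T F p"
  from subsetD[OF rc_sub q] have "F q = F p" by simp
  then have L: "{r \<in> topspace T. F r = F q} = {r \<in> topspace T. F r = F p}" by simp
  have "connected_component_of (subtopology T {r \<in> topspace T. F r = F p}) p q"
    using q unfolding reeb_cls_def by simp
  then have "connected_component_of (subtopology T {r \<in> topspace T. F r = F p}) p =
     connected_component_of (subtopology T {r \<in> topspace T. F r = F p}) q"
    by (rule conjunct2[OF conjunct2[OF connected_component_of_equiv[THEN iffD1]]])
  then have eq: "connected_component_of (subtopology T {r \<in> topspace T. F r = F p}) p =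
     connected_component_of (subtopology T {r \<in> topspace T. F r = F p}) q" .
  have e2: "connected_component_of (subtopology T {r \<in> topspace T. F r = F q}) q =
     connected_component_of (subtopology T {r \<in> topspace T. F r = F p}) q"
    using L by (rule arg_cong[of _ _ "\<lambda>S. connected_component_of (subtopology T S) q"])
  show ?thesis unfolding reeb_cls_def e2 eq[symmetric] by (rule refl)
qed

lemma rc_max: "connectedin T S \<Longrightarrow> S \<subseteq> {q \<in> topspace T. F q = F p} \<Longrightarrow> p \<in> S \<Longrightarrow> S \<subseteq> reeb_cls T F p"
  unfolding reeb_cls_def by (simp add: connected_component_of_maximal connectedin_subtopology)

lemma rc_mem_iff: "p \<in> topspace T \<Longrightarrow> q \<in> reeb_cls T F p \<longleftrightarrow> q \<in> topspace T \<and> reeb_cls T F q = reeb_cls T F p"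
proof
  assume p: "p \<in> topspace T"
  show "q \<in> topspace T \<and> reeb_cls T F q = reeb_cls T F p" if q: "q \<in> reeb_cls T F p"
  proof
    show "q \<in> topspace T" using subsetD[OF rc_sub q] by simp
    show "reeb_cls T F q = reeb_cls T F p" using q by (rule rc_eq)
  qed
  show "q \<in> reeb_cls T F p" if h: "q \<in> topspace T \<and> reeb_cls T F q = reeb_cls T F p"
  proof -
    have "q \<in> reeb_cls T F q" using h rc_self[of q T F] by auto
    then show ?thesis using h by simp
  qed
qed

lemma conn_side:
  assumes "connectedin X S" "openin X U" "openin X V" "S \<subseteq> U \<union> V" "U \<inter> V \<inter> S = {}" "U \<inter> S \<noteq> {}"
  shows "S \<subseteq> U"
proof -
  have "V \<inter> S = {}" using assms(1) unfolding connectedin using assms(2-6) by metis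
  then show ?thesis using assms(4) by auto
qed

lemma usc:
  assumes cs: "compact_space T" and hs: "Hausdorff_space T"
    and cF: "continuous_map T euclideanreal F"
    and p: "p \<in> topspace T" and U: "openin T U" and CU: "reeb_cls T F p \<subseteq> U"
  shows "\<exists>V. openin T V \<and> reeb_cls T F p \<subseteq> V \<and> V \<subseteq> U \<and> (\<forall>q\<in>V. reeb_cls T F q \<subseteq> V)"
proof -
  define L where "L = {q \<in> topspace T. F q = F p}"
  define LT where "LT = subtopology T L"
  define C where "C = reeb_cls T F p"
  have L2: "L = {q \<in> topspace T. F q \<in> {F p}}" unfolding L_def by simp
  have Lcl: "closedin T L" unfolding L2 by (rule closedin_continuous_map_preimage[OF cF]) simp
  have LTc: "compact_space LT" unfolding LT_def
    by (rule compact_space_subtopology[OF closedin_compact_space[OF cs Lcl]])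
  have LTh: "Hausdorff_space LT" unfolding LT_def by (rule Hausdorff_space_subtopology[OF hs])
  have tLT: "topspace LT = L" unfolding LT_def L_def by (auto simp: topspace_subtopology)
  have pL: "p \<in> topspace LT" unfolding tLT L_def using p by simp
  have "C \<in> connected_components_of LT"
    unfolding connected_components_of_def C_def reeb_cls_def LT_def[symmetric] L_def[symmetric]
    using pL by (rule imageI)
  then have Cq: "C \<in> quasi_components_of LT"
    using quasi_eq_connected_components_of[of LT] LTc LTh by simp
  define K where "K = L - U"
  have "closedin LT K"
  proof -
    have "closedin T (topspace T - U)" using U by (simp add: closedin_diff)
    moreover have "K = (topspace T - U) \<inter> L" unfolding K_def L_def by auto
    ultimately show ?thesis unfolding LT_def closedin_subtopology by blast
  qed
  then have Kc: "compactin LT K" by (rule closedin_compact_space[OF LTc])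
  have "disjnt C K" unfolding K_def C_def disjnt_def using CU by auto
  then have "separated_between LT C K" using separated_between_quasi_component_compact[OF Cq Kc] by simp
  then obtain W1 W2 where W: "openin LT W1" "openin LT W2" "W1 \<union> W2 = L" "disjnt W1 W2" "C \<subseteq> W1" "K \<subseteq> W2"
    unfolding separated_between_def tLT by metis
  have W1U: "W1 \<subseteq> U" using W(3,4,6) unfolding K_def disjnt_def by auto
  have "closedin LT W1"
  proof -
    have "W1 = topspace LT - W2" using W(3,4) unfolding tLT disjnt_def by auto
    then show ?thesis using W(2) by (simp add: closedin_diff)
  qed
  then have W1c: "compactin T W1" using closedin_compact_space[OF cs] closedin_trans_full Lcl
    unfolding LT_def by metis
  have "closedin LT W2"
  proof -
    have "W2 = topspace LT - W1" using W(3,4) unfolding tLT disjnt_def by auto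
    then show ?thesis using W(1) by (simp add: closedin_diff)
  qed
  then have W2c: "compactin T W2" using closedin_compact_space[OF cs] closedin_trans_full Lcl
    unfolding LT_def by metis
  obtain O1 O2 where O: "openin T O1" "openin T O2" "W1 \<subseteq> O1" "W2 \<subseteq> O2" "disjnt O1 O2"
    using hs[unfolded Hausdorff_space_compact_sets] W1c W2c W(4) by metis
  define O1' where "O1' = O1 \<inter> U"
  have O1'o: "openin T O1'" unfolding O1'_def using O(1) U by (rule openin_Int)
  define Z where "Z = topspace T - (O1' \<union> O2)"
  have "closedin T Z" unfolding Z_def using O1'o O(2) by (simp add: closedin_diff openin_Un)
  then have "compactin T Z" by (rule closedin_compact_space[OF cs])
  then have "compactin euclideanreal (F ` Z)" using cF by (rule image_compactin)
  then have clFZ: "closed (F ` Z)" by (simp add: compact_imp_closed)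
  have "F p \<notin> F ` Z"
  proof
    assume "F p \<in> F ` Z"
    then obtain z where z: "z \<in> Z" "F z = F p" by auto
    then have "z \<in> L" unfolding Z_def L_def by auto
    then have "z \<in> O1' \<union> O2" using W(3) W1U O(3,4) unfolding O1'_def by auto
    then show False using z unfolding Z_def by auto
  qed
  then obtain \<delta> where d: "\<delta> > 0" "\<forall>x\<in>F ` Z. \<delta> \<le> dist (F p) x"
    using separate_point_closed[OF clFZ] by metis
  define V where "V = O1' \<inter> {q \<in> topspace T. F q \<in> ball (F p) \<delta>}"
  have Vo: "openin T V" unfolding V_def
    by (rule openin_Int[OF O1'o openin_continuous_map_preimage[OF cF]]) simp
  have CL: "C \<subseteq> L" unfolding C_def L_def by (rule rc_sub)
  have CV: "C \<subseteq> V"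
  proof
    fix q assume q: "q \<in> C"
    then have "q \<in> L" using CL by auto
    then show "q \<in> V" using q W(5) W1U O(3) d(1) unfolding V_def O1'_def L_def by auto
  qed
  have VU: "V \<subseteq> U" unfolding V_def O1'_def by auto
  have sat: "reeb_cls T F q \<subseteq> V" if q: "q \<in> V" for q
  proof -
    define D where "D = reeb_cls T F q"
    have Dc: "connectedin T D" unfolding D_def by (rule rc_conn)
    have DL: "D \<subseteq> {r \<in> topspace T. F r = F q}" unfolding D_def by (rule rc_sub)
    have qD: "q \<in> D" unfolding D_def using q unfolding V_def by (simp add: rc_self)
    have Fq: "dist (F p) (F q) < \<delta>" using q unfolding V_def by (simp add: dist_commute)
    have DO: "D \<subseteq> O1' \<union> O2"
    proof
      fix r assume r: "r \<in> D"
      then have r2: "r \<in> topspace T" "F r = F q" using DL by auto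
      have "r \<notin> Z"
      proof
        assume "r \<in> Z"
        then have "\<delta> \<le> dist (F p) (F r)" using d(2) by auto
        then show False using Fq r2 by simp
      qed
      then show "r \<in> O1' \<union> O2" using r2 unfolding Z_def by auto
    qed
    have "O1' \<inter> O2 \<inter> D = {}" using O(5) unfolding O1'_def disjnt_def by auto
    moreover have "O1' \<inter> D \<noteq> {}" using q qD unfolding V_def by auto
    ultimately have "D \<subseteq> O1'" using conn_side[OF Dc O1'o O(2) DO] by simp
    then show ?thesis using DL Fq unfolding D_def[symmetric] V_def by auto
  qed
  show ?thesis using Vo CV VU sat unfolding C_def by metis
qed

lemma reeb_top_open: "openin (reeb_top T F) G \<longleftrightarrow> G \<subseteq> reeb_cls T F ` topspace T \<and> openin T {x \<in> topspace T. reeb_cls T F x \<in> G}"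
  unfolding reeb_top_def by (rule qtop_open)

lemma reeb_top_space: "topspace (reeb_top T F) = reeb_cls T F ` topspace T"
  unfolding reeb_top_def by (rule qtop_space)

lemma preimage_conn:
  assumes cs: "compact_space T" and hs: "Hausdorff_space T"
    and cF: "continuous_map T euclideanreal F"
    and A: "connectedin (reeb_top T F) A"
  shows "connectedin T {p \<in> topspace T. reeb_cls T F p \<in> A}"
proof -
  define D where "D = {p \<in> topspace T. reeb_cls T F p \<in> A}"
  define G where "G = (\<lambda>E. reeb_cls T F ` \<Union>{V. openin T V \<and> V \<subseteq> E \<and> (\<forall>q\<in>V. reeb_cls T F q \<subseteq> V)})"
  have Asub: "A \<subseteq> reeb_cls T F ` topspace T" using A connectedin_subset_topspace reeb_top_space by metis
  have fib: "a \<subseteq> D" if a: "a \<in> A" for a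
  proof
    fix x assume x: "x \<in> a"
    obtain r where r: "r \<in> topspace T" "a = reeb_cls T F r" using a Asub by auto
    then have "x \<in> topspace T" "reeb_cls T F x = a" using x rc_mem_iff[OF r(1)] by auto
    then show "x \<in> D" unfolding D_def using a by simp
  qed
  have Gopen: "openin (reeb_top T F) (G E)" for E
  proof -
    let ?S = "{V. openin T V \<and> V \<subseteq> E \<and> (\<forall>q\<in>V. reeb_cls T F q \<subseteq> V)}"
    have e: "{x \<in> topspace T. reeb_cls T F x \<in> G E} = \<Union>?S"
    proof
      show "{x \<in> topspace T. reeb_cls T F x \<in> G E} \<subseteq> \<Union>?S"
      proof
        fix x assume "x \<in> {x \<in> topspace T. reeb_cls T F x \<in> G E}"
        then obtain y V where xy: "x \<in> topspace T" "reeb_cls T F x = reeb_cls T F y" "V \<in> ?S" "y \<in> V"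
          unfolding G_def by auto
        then have "x \<in> reeb_cls T F y" using rc_self[of x T F] by simp
        then have "x \<in> V" using xy(3,4) by auto
        then show "x \<in> \<Union>?S" using xy(3) by auto
      qed
      show "\<Union>?S \<subseteq> {x \<in> topspace T. reeb_cls T F x \<in> G E}"
      proof
        fix x assume "x \<in> \<Union>?S"
        then obtain V where "V \<in> ?S" "x \<in> V" by auto
        then show "x \<in> {x \<in> topspace T. reeb_cls T F x \<in> G E}"
          unfolding G_def using openin_subset[of T V] by auto
      qed
    qed
    have "openin T (\<Union>?S)" by (rule openin_Union) auto
    moreover have "G E \<subseteq> reeb_cls T F ` topspace T" unfolding G_def using openin_subset by fastforce
    ultimately show ?thesis unfolding reeb_top_open e by simp
  qed
  have inG: "a \<in> G E" if a: "a \<in> A" and aE: "a \<subseteq> E" and E: "openin T E" for a E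
  proof -
    obtain r where r: "r \<in> topspace T" "a = reeb_cls T F r" using a Asub by auto
    obtain V where V: "openin T V" "a \<subseteq> V" "V \<subseteq> E" "\<forall>q\<in>V. reeb_cls T F q \<subseteq> V"
      using usc[OF cs hs cF r(1) E] aE r(2) by metis
    have "r \<in> V" using V(2) r rc_self[of r T F] by auto
    then show ?thesis unfolding G_def using V r(2) by blast
  qed
  have Gsub: "a \<subseteq> E" if aG: "a \<in> G E" for a E
  proof -
    from aG obtain x where x: "a = reeb_cls T F x" "x \<in> \<Union>{V. openin T V \<and> V \<subseteq> E \<and> (\<forall>q\<in>V. reeb_cls T F q \<subseteq> V)}"
      unfolding G_def by (rule imageE)
    then obtain V where "x \<in> V" "V \<subseteq> E" "\<forall>q\<in>V. reeb_cls T F q \<subseteq> V" by auto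
    then show ?thesis using x(1) by auto
  qed
  have anon: "a \<noteq> {}" if aA0: "a \<in> A" for a
  proof -
    obtain r where r: "r \<in> topspace T" "a = reeb_cls T F r" using aA0 Asub by auto
    then show ?thesis using rc_self[of r T F] by auto
  qed
  have aconn: "connectedin T a" if aA0: "a \<in> A" for a
  proof -
    obtain r where r: "r \<in> topspace T" "a = reeb_cls T F r" using aA0 Asub by auto
    then show ?thesis using rc_conn by simp
  qed
  have "\<not> (\<exists>E1 E2. openin T E1 \<and> openin T E2 \<and> D \<subseteq> E1 \<union> E2 \<and> E1 \<inter> E2 \<inter> D = {} \<and> E1 \<inter> D \<noteq> {} \<and> E2 \<inter> D \<noteq> {})"
  proof
    assume "\<exists>E1 E2. openin T E1 \<and> openin T E2 \<and> D \<subseteq> E1 \<union> E2 \<and> E1 \<inter> E2 \<inter> D = {} \<and> E1 \<inter> D \<noteq> {} \<and> E2 \<inter> D \<noteq> {}"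
    then obtain E1 E2 where E: "openin T E1" "openin T E2" "D \<subseteq> E1 \<union> E2" "E1 \<inter> E2 \<inter> D = {}" "E1 \<inter> D \<noteq> {}" "E2 \<inter> D \<noteq> {}"
      by blast
    have side1: "a \<subseteq> E1" if a: "a \<in> A" "E1 \<inter> a \<noteq> {}" for a
    proof (rule conn_side[OF aconn[OF a(1)] E(1) E(2)])
      show "a \<subseteq> E1 \<union> E2" using fib[OF a(1)] E(3) by auto
      show "E1 \<inter> E2 \<inter> a = {}" using fib[OF a(1)] E(4) by auto
    qed (rule a(2))
    have side2: "a \<subseteq> E2" if a: "a \<in> A" "E2 \<inter> a \<noteq> {}" for a
    proof (rule conn_side[OF aconn[OF a(1)] E(2) E(1)])
      show "a \<subseteq> E2 \<union> E1" using fib[OF a(1)] E(3) by auto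
      show "E2 \<inter> E1 \<inter> a = {}" using fib[OF a(1)] E(4) by auto
    qed (rule a(2))
    have cover: "A \<subseteq> G E1 \<union> G E2"
    proof
      fix a assume a: "a \<in> A"
      have "a \<subseteq> E1 \<or> a \<subseteq> E2"
      proof (cases "E1 \<inter> a = {}")
        case True
        then have "E2 \<inter> a \<noteq> {}" using fib[OF a] E(3) anon[OF a] by auto
        then show ?thesis using side2 a by auto
      next
        case False then show ?thesis using side1 a by auto
      qed
      then show "a \<in> G E1 \<union> G E2" using inG[OF a] E(1,2) by auto
    qed
    have disj: "G E1 \<inter> G E2 \<inter> A = {}"
    proof (rule ccontr)
      assume "G E1 \<inter> G E2 \<inter> A \<noteq> {}"
      then obtain a where a: "a \<in> G E1" "a \<in> G E2" "a \<in> A" by auto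
      then have "a \<subseteq> E1 \<inter> E2 \<inter> D" using Gsub fib by blast
      then show False using anon[OF a(3)] E(4) by auto
    qed
    have ne1: "G E1 \<inter> A \<noteq> {}"
    proof -
      obtain d where d: "d \<in> E1" "d \<in> D" using E(5) by auto
      let ?a = "reeb_cls T F d"
      have aA: "?a \<in> A" using d unfolding D_def by simp
      have "d \<in> ?a" using d rc_self[of d T F] unfolding D_def by auto
      then have "?a \<subseteq> E1" using side1[OF aA] d by auto
      then show ?thesis using inG[OF aA _ E(1)] aA by auto
    qed
    have ne2: "G E2 \<inter> A \<noteq> {}"
    proof -
      obtain d where d: "d \<in> E2" "d \<in> D" using E(6) by auto
      let ?a = "reeb_cls T F d"
      have aA: "?a \<in> A" using d unfolding D_def by simp
      have "d \<in> ?a" using d rc_self[of d T F] unfolding D_def by auto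
      then have "?a \<subseteq> E2" using side2[OF aA] d by auto
      then show ?thesis using inG[OF aA _ E(2)] aA by auto
    qed
    show False using A[unfolded connectedin] Gopen cover disj ne1 ne2 by metis
  qed
  moreover have "D \<subseteq> topspace T" unfolding D_def by auto
  ultimately show ?thesis unfolding connectedin D_def by simp
qed

lemma thick_space: "topspace (thick_top X e) = topspace X \<times> {-e..e}"
  unfolding thick_top_def by simp

lemma thick_compact: "compact_space X \<Longrightarrow> compact_space (thick_top X e)"
  unfolding thick_top_def compact_space_prod_topology
  by (simp add: compact_space_subtopology)

lemma thick_haus: "Hausdorff_space X \<Longrightarrow> Hausdorff_space (thick_top X e)"
  unfolding thick_top_def Hausdorff_space_prod_topology
  by (simp add: Hausdorff_space_subtopology)

lemma thick_fun_cont: "continuous_map X euclideanreal f \<Longrightarrow> continuous_map (thick_top X e) euclideanreal (thick_fun f)"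
proof -
  assume cf: "continuous_map X euclideanreal f"
  have 1: "continuous_map (thick_top X e) euclideanreal (\<lambda>p. f (fst p))"
    unfolding thick_top_def using continuous_map_compose[OF continuous_map_fst cf] by (simp add: o_def)
  have 2: "continuous_map (thick_top X e) euclideanreal snd"
    unfolding thick_top_def
    using continuous_map_snd[of X "top_of_set {-e..e}"] continuous_map_in_subtopology by blast
  have "continuous_map (thick_top X e) euclideanreal (\<lambda>p. f (fst p) + snd p)"
    by (rule continuous_map_add[OF 1 2])
  moreover have "thick_fun f = (\<lambda>p. f (fst p) + snd p)" unfolding thick_fun_def by auto
  ultimately show ?thesis by simp
qed

lemma cls_facts:
  assumes a: "a \<in> topspace (reeb_top T F)" and p: "p \<in> a"
  shows "p \<in> topspace T" "reeb_cls T F p = a" "reeb_fun F a = F p"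
proof -
  obtain r where r: "r \<in> topspace T" "a = reeb_cls T F r" using a unfolding reeb_top_space by auto
  show pt: "p \<in> topspace T" and "reeb_cls T F p = a" using p r rc_mem_iff[OF r(1)] by auto
  have "(SOME x. x \<in> a) \<in> a" using p by (rule someI)
  then have "F (SOME x. x \<in> a) = F r" using rc_sub[of T F r] r(2) by auto
  moreover have "F p = F r" using rc_sub[of T F r] r(2) p by auto
  ultimately show "reeb_fun F a = F p" unfolding reeb_fun_def by simp
qed

lemma core:
  assumes cs: "compact_space X2" and hs: "Hausdorff_space X2"
    and cf: "continuous_map X2 euclideanreal f2" and eps: "\<epsilon> \<ge> 0"
    and A: "connectedin (sm_top X2 f2 \<epsilon>) A"
    and rng: "\<forall>a\<in>A. c - \<epsilon> \<le> sm_fun f2 a \<and> sm_fun f2 a \<le> c + \<epsilon>"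
    and a: "a \<in> A" "p \<in> a" and b: "b \<in> A" "q \<in> b"
  shows "sm_pi X2 f2 (2*\<epsilon>) (fst p, c - f2 (fst p)) = sm_pi X2 f2 (2*\<epsilon>) (fst q, c - f2 (fst q))"
proof -
  define T where "T = thick_top X2 \<epsilon>"
  define F where "F = thick_fun f2"
  define T2 where "T2 = thick_top X2 (2*\<epsilon>)"
  define D where "D = {r \<in> topspace T. reeb_cls T F r \<in> A}"
  define k where "k = (\<lambda>r::'a \<times> real. (fst r, c - f2 (fst r)))"
  have Y: "sm_top X2 f2 \<epsilon> = reeb_top T F" unfolding sm_top_def T_def F_def ..
  have Dc: "connectedin T D" unfolding D_def
    by (rule preimage_conn) (use thick_compact[OF cs] thick_haus[OF hs] thick_fun_cont[OF cf] A Y in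
       \<open>auto simp: T_def F_def\<close>)
  have Asub: "A \<subseteq> topspace (reeb_top T F)" using A Y connectedin_subset_topspace by metis
  have inD: "r \<in> D \<and> reeb_cls T F r = x" if "x \<in> A" "r \<in> x" for x r
  proof -
    have "x \<in> topspace (reeb_top T F)" using that Asub by auto
    then show ?thesis using cls_facts[of x T F r] that unfolding D_def by auto
  qed
  have Drng: "c - \<epsilon> \<le> F r \<and> F r \<le> c + \<epsilon>" if r: "r \<in> D" for r
  proof -
    have "reeb_cls T F r \<in> A" "r \<in> topspace T" using r unfolding D_def by auto
    moreover have "r \<in> reeb_cls T F r" using rc_self[of r T F] r unfolding D_def by auto
    moreover have "sm_fun f2 (reeb_cls T F r) = F r"
      unfolding sm_fun_def F_def[symmetric]
      using cls_facts(3)[of "reeb_cls T F r" T F r] calculation Asub by auto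
    ultimately show ?thesis using rng by metis
  qed
  have kD: "k ` D \<subseteq> topspace T2"
  proof
    fix y assume "y \<in> k ` D"
    then obtain r where r: "r \<in> D" "y = k r" by auto
    have rt: "fst r \<in> topspace X2" "snd r \<in> {-\<epsilon>..\<epsilon>}" using r(1) unfolding D_def T_def thick_space by auto
    have "F r = f2 (fst r) + snd r" unfolding F_def thick_fun_def by (simp add: case_prod_beta)
    then show "y \<in> topspace T2" using Drng[OF r(1)] rt r(2) unfolding k_def T2_def thick_space by auto
  qed
  have kc: "continuous_map (subtopology T D) T2 k"
  proof -
    have tD: "topspace (subtopology T D) = D" using Dc connectedin_subset_topspace by (auto simp: topspace_subtopology)
    have 1: "continuous_map (subtopology T D) X2 fst"
      unfolding T_def thick_top_def by (rule continuous_map_from_subtopology[OF continuous_map_fst])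
    have "continuous_map (subtopology T D) euclideanreal (\<lambda>r. c - f2 (fst r))"
      by (rule continuous_map_diff[OF continuous_map_const[THEN iffD2] continuous_map_compose[OF 1 cf, unfolded o_def]]) simp
    moreover have "(\<lambda>r. c - f2 (fst r)) \<in> topspace (subtopology T D) \<rightarrow> {-(2*\<epsilon>)..2*\<epsilon>}"
      using kD unfolding tD k_def T2_def thick_space by auto
    ultimately have 2: "continuous_map (subtopology T D) (top_of_set {-(2*\<epsilon>)..2*\<epsilon>}) (\<lambda>r. c - f2 (fst r))"
      by (simp add: continuous_map_in_subtopology)
    show ?thesis unfolding T2_def thick_top_def k_def
      by (rule continuous_map_pairedI[OF 1 2])
  qed
  have kDc: "connectedin T2 (k ` D)"
    by (rule connectedin_continuous_map_image[OF kc]) (use Dc in \<open>simp add: connectedin_subtopology\<close>)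
  have pD: "p \<in> D" using inD a by auto
  have qD: "q \<in> D" using inD b by auto
  have lev: "k ` D \<subseteq> {y \<in> topspace T2. thick_fun f2 y = thick_fun f2 (k p)}"
    using kD unfolding k_def thick_fun_def by auto
  have "k ` D \<subseteq> reeb_cls T2 (thick_fun f2) (k p)"
    by (rule rc_max[OF kDc lev]) (use pD in auto)
  then have "k q \<in> reeb_cls T2 (thick_fun f2) (k p)" using qD by auto
  then have "reeb_cls T2 (thick_fun f2) (k q) = reeb_cls T2 (thick_fun f2) (k p)" by (rule rc_eq)
  then show ?thesis unfolding sm_pi_def T2_def k_def by simp
qed




definition rP where "rP V E lo hi fv = (\<lambda>U. U \<subseteq> rpoints V E lo hi fv \<and>
     (\<forall>e\<in>E. openin (top_of_set {fv (lo e)..fv (hi e)})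
                 {h \<in> {fv (lo e)..fv (hi e)}. remb lo hi fv e h \<in> U}))"

lemma istop_rtop: "istopology (rP V E lo hi fv)"
proof -
  have 1: "rP V E lo hi fv (S \<inter> T)" if S: "rP V E lo hi fv S" and T: "rP V E lo hi fv T" for S T
  proof -
    have e: "{h \<in> {fv (lo e)..fv (hi e)}. remb lo hi fv e h \<in> S \<inter> T} =
       {h \<in> {fv (lo e)..fv (hi e)}. remb lo hi fv e h \<in> S} \<inter> {h \<in> {fv (lo e)..fv (hi e)}. remb lo hi fv e h \<in> T}" for e
      by auto
    show ?thesis using S T unfolding rP_def e by (auto intro: openin_Int)
  qed
  have 2: "rP V E lo hi fv (\<Union>K)" if K: "\<forall>S\<in>K. rP V E lo hi fv S" for K
  proof -
    have e: "{h \<in> {fv (lo e)..fv (hi e)}. remb lo hi fv e h \<in> \<Union>K} =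
       \<Union>((\<lambda>S. {h \<in> {fv (lo e)..fv (hi e)}. remb lo hi fv e h \<in> S}) ` K)" for e
      by auto
    show ?thesis using K unfolding rP_def e by (auto intro!: openin_Union)
  qed
  show ?thesis unfolding istopology_def using 1 2 by blast
qed

lemma rtop_open: "openin (rtop V E lo hi fv) U \<longleftrightarrow> U \<subseteq> rpoints V E lo hi fv \<and>
     (\<forall>e\<in>E. openin (top_of_set {fv (lo e)..fv (hi e)})
                 {h \<in> {fv (lo e)..fv (hi e)}. remb lo hi fv e h \<in> U})"
proof -
  have "rtop V E lo hi fv = topology (rP V E lo hi fv)" unfolding rtop_def rP_def ..
  then show ?thesis using topology_inverse'[OF istop_rtop] unfolding rP_def by simp
qed

lemma remb_in:
  assumes m: "mgraph V E lo hi fv" and e: "e \<in> E" and h: "h \<in> {fv (lo e)..fv (hi e)}"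
  shows "remb lo hi fv e h \<in> rpoints V E lo hi fv" "rfun fv (remb lo hi fv e h) = h"
proof -
  have "lo e \<in> V" "hi e \<in> V" using m e unfolding mgraph_def by auto
  then show "remb lo hi fv e h \<in> rpoints V E lo hi fv" using h e unfolding remb_def rpoints_def by auto
  show "rfun fv (remb lo hi fv e h) = h" unfolding remb_def by auto
qed

lemma rtop_space:
  assumes m: "mgraph V E lo hi fv"
  shows "topspace (rtop V E lo hi fv) = rpoints V E lo hi fv"
proof -
  have e: "{h \<in> {fv (lo e)..fv (hi e)}. remb lo hi fv e h \<in> rpoints V E lo hi fv} = {fv (lo e)..fv (hi e)}"
    if "e \<in> E" for e using remb_in[OF m that] by auto
  have "openin (rtop V E lo hi fv) (rpoints V E lo hi fv)"
    unfolding rtop_open using e by simp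
  moreover have "openin (rtop V E lo hi fv) U \<Longrightarrow> U \<subseteq> rpoints V E lo hi fv" for U
    by (simp add: rtop_open)
  ultimately show ?thesis by (metis openin_subset openin_topspace subset_antisym)
qed

lemma remb_cont:
  assumes m: "mgraph V E lo hi fv" and e: "e \<in> E"
  shows "continuous_map (top_of_set {fv (lo e)..fv (hi e)}) (rtop V E lo hi fv) (remb lo hi fv e)"
  unfolding continuous_map
proof
  show "remb lo hi fv e ` topspace (top_of_set {fv (lo e)..fv (hi e)}) \<subseteq> topspace (rtop V E lo hi fv)"
    using remb_in[OF m e] rtop_space[OF m] by auto
  show "\<forall>U. openin (rtop V E lo hi fv) U \<longrightarrow>
        openin (top_of_set {fv (lo e)..fv (hi e)}) {x \<in> topspace (top_of_set {fv (lo e)..fv (hi e)}). remb lo hi fv e x \<in> U}"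
    using e by (simp add: rtop_open)
qed

lemma rtop_cont_real:
  assumes m: "mgraph V E lo hi fv"
    and c: "\<And>e. e \<in> E \<Longrightarrow> continuous_on {fv (lo e)..fv (hi e)} (\<lambda>h. u (remb lo hi fv e h))"
  shows "continuous_map (rtop V E lo hi fv) euclideanreal u"
  unfolding continuous_map
proof (intro conjI allI impI)
  show "u ` topspace (rtop V E lo hi fv) \<subseteq> topspace euclideanreal" by simp
  fix W :: "real set" assume W: "openin euclideanreal W"
  show "openin (rtop V E lo hi fv) {x \<in> topspace (rtop V E lo hi fv). u x \<in> W}"
    unfolding rtop_open rtop_space[OF m]
  proof (intro conjI ballI)
    show "{x \<in> rpoints V E lo hi fv. u x \<in> W} \<subseteq> rpoints V E lo hi fv" by auto
    fix e assume e: "e \<in> E"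
    have eq: "{h \<in> {fv (lo e)..fv (hi e)}. remb lo hi fv e h \<in> {x \<in> rpoints V E lo hi fv. u x \<in> W}}
       = {h \<in> topspace (top_of_set {fv (lo e)..fv (hi e)}). u (remb lo hi fv e h) \<in> W}"
      using remb_in[OF m e] by auto
    have "continuous_map (top_of_set {fv (lo e)..fv (hi e)}) euclideanreal (\<lambda>h. u (remb lo hi fv e h))"
      using c[OF e] by simp
    then show "openin (top_of_set {fv (lo e)..fv (hi e)})
       {h \<in> {fv (lo e)..fv (hi e)}. remb lo hi fv e h \<in> {x \<in> rpoints V E lo hi fv. u x \<in> W}}"
      unfolding eq using W by (rule openin_continuous_map_preimage)
  qed
qed

lemma rtop_compact:
  assumes m: "mgraph V E lo hi fv"
  shows "compact_space (rtop V E lo hi fv)"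
proof -
  have eq: "rpoints V E lo hi fv = Nd ` V \<union> \<Union>((\<lambda>e. remb lo hi fv e ` {fv (lo e)..fv (hi e)}) ` E)"
  proof
    show "rpoints V E lo hi fv \<subseteq> Nd ` V \<union> \<Union>((\<lambda>e. remb lo hi fv e ` {fv (lo e)..fv (hi e)}) ` E)"
    proof
      fix x assume "x \<in> rpoints V E lo hi fv"
      then consider "x \<in> Nd ` V" | e h where "x = Ed e h" "e \<in> E" "fv (lo e) < h" "h < fv (hi e)"
        unfolding rpoints_def by auto
      then show "x \<in> Nd ` V \<union> \<Union>((\<lambda>e. remb lo hi fv e ` {fv (lo e)..fv (hi e)}) ` E)"
      proof cases
        case 1 then show ?thesis by auto
      next
        case 2
        then have "x = remb lo hi fv e h" unfolding remb_def by auto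
        moreover have "h \<in> {fv (lo e)..fv (hi e)}" using 2 by auto
        ultimately have "x \<in> remb lo hi fv e ` {fv (lo e)..fv (hi e)}" by (rule image_eqI)
        then show ?thesis using 2(2) by blast
      qed
    qed
    have "Nd ` V \<subseteq> rpoints V E lo hi fv" unfolding rpoints_def by auto
    moreover have "\<Union>((\<lambda>e. remb lo hi fv e ` {fv (lo e)..fv (hi e)}) ` E) \<subseteq> rpoints V E lo hi fv"
      using remb_in(1)[OF m] by blast
    ultimately show "Nd ` V \<union> \<Union>((\<lambda>e. remb lo hi fv e ` {fv (lo e)..fv (hi e)}) ` E) \<subseteq> rpoints V E lo hi fv"
      by (rule Un_least)
  qed
  have fin: "finite V" "finite E" using m unfolding mgraph_def by auto
  have "compactin (rtop V E lo hi fv) (Nd ` V)"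
    by (rule finite_imp_compactin) (use fin in \<open>auto simp: rtop_space[OF m] rpoints_def\<close>)
  moreover have "compactin (rtop V E lo hi fv) (\<Union>((\<lambda>e. remb lo hi fv e ` {fv (lo e)..fv (hi e)}) ` E))"
  proof (rule compactin_Union)
    show "finite ((\<lambda>e. remb lo hi fv e ` {fv (lo e)..fv (hi e)}) ` E)" using fin by simp
    fix S assume "S \<in> (\<lambda>e. remb lo hi fv e ` {fv (lo e)..fv (hi e)}) ` E"
    then obtain e where e: "e \<in> E" "S = remb lo hi fv e ` {fv (lo e)..fv (hi e)}" by auto
    have "compactin (top_of_set {fv (lo e)..fv (hi e)}) {fv (lo e)..fv (hi e)}"
      by (simp add: compactin_subtopology)
    then show "compactin (rtop V E lo hi fv) S" unfolding e(2)
      by (rule image_compactin[OF _ remb_cont[OF m e(1)]])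
  qed
  ultimately have "compactin (rtop V E lo hi fv) (rpoints V E lo hi fv)"
    unfolding eq by (rule compactin_Un)
  then show ?thesis unfolding compact_space_def rtop_space[OF m] .
qed

lemma haus_sep:
  assumes "\<And>x y. x \<in> topspace X \<Longrightarrow> y \<in> topspace X \<Longrightarrow> x \<noteq> y \<Longrightarrow>
             \<exists>u. continuous_map X euclideanreal u \<and> u x \<noteq> u y"
  shows "Hausdorff_space X"
  unfolding Hausdorff_space_def
proof (intro allI impI)
  fix x y assume xy: "x \<in> topspace X \<and> y \<in> topspace X \<and> x \<noteq> y"
  then obtain u where u: "continuous_map X euclideanreal u" "u x \<noteq> u y" using assms by metis
  define r where "r = dist (u x) (u y) / 2"
  have r: "r > 0" using u(2) unfolding r_def by simp
  define U where "U = {z \<in> topspace X. u z \<in> ball (u x) r}"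
  define W where "W = {z \<in> topspace X. u z \<in> ball (u y) r}"
  have "openin X U" unfolding U_def by (rule openin_continuous_map_preimage[OF u(1)]) simp
  moreover have "openin X W" unfolding W_def by (rule openin_continuous_map_preimage[OF u(1)]) simp
  moreover have "x \<in> U" "y \<in> W" using xy r unfolding U_def W_def by auto
  moreover have "disjnt U W"
  proof -
    have "ball (u x) r \<inter> ball (u y) r = {}"
    proof (rule ccontr)
      assume "ball (u x) r \<inter> ball (u y) r \<noteq> {}"
      then obtain z where "dist (u x) z < r" "dist (u y) z < r" by auto
      moreover have "dist (u x) (u y) \<le> dist (u x) z + dist z (u y)" by (rule dist_triangle)
      moreover have "dist z (u y) = dist (u y) z" by (rule dist_commute)
      ultimately have "dist (u x) (u y) < 2 * r" by linarith
      then show False unfolding r_def by simp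
    qed
    then show ?thesis unfolding disjnt_def U_def W_def by auto
  qed
  ultimately show "\<exists>U V. openin X U \<and> openin X V \<and> x \<in> U \<and> y \<in> V \<and> disjnt U V" by blast
qed

definition nu :: "(nat \<Rightarrow> nat) \<Rightarrow> (nat \<Rightarrow> nat) \<Rightarrow> (nat \<Rightarrow> real) \<Rightarrow> nat \<Rightarrow> rpt \<Rightarrow> real" where
  "nu lo hi fv w p = (case p of Nd w' \<Rightarrow> if w' = w then 1 else 0
     | Ed e h \<Rightarrow> (if lo e = w then (fv (hi e) - h) / (fv (hi e) - fv (lo e)) else 0)
                + (if hi e = w then (h - fv (lo e)) / (fv (hi e) - fv (lo e)) else 0))"

definition mu :: "(nat \<Rightarrow> nat) \<Rightarrow> (nat \<Rightarrow> nat) \<Rightarrow> (nat \<Rightarrow> real) \<Rightarrow> nat \<Rightarrow> rpt \<Rightarrow> real" where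
  "mu lo hi fv e0 p = (case p of Nd w' \<Rightarrow> 0
     | Ed e h \<Rightarrow> if e = e0 then (h - fv (lo e)) * (fv (hi e) - h) else 0)"

lemma nu_cont:
  assumes m: "mgraph V E lo hi fv"
  shows "continuous_map (rtop V E lo hi fv) euclideanreal (nu lo hi fv w)"
proof (rule rtop_cont_real[OF m])
  fix e assume e: "e \<in> E"
  define a where "a = fv (lo e)"
  define b where "b = fv (hi e)"
  have ab: "a < b" using m e unfolding mgraph_def a_def b_def by auto
  let ?G = "\<lambda>h. (if lo e = w then 1 else 0) * ((b - h) / (b - a)) + (if hi e = w then 1 else 0) * ((h - a) / (b - a))"
  have "continuous_on {a..b} ?G" by (intro continuous_intros) (use ab in auto)
  moreover have "nu lo hi fv w (remb lo hi fv e h) = ?G h" if "h \<in> {a..b}" for h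
    using ab that unfolding nu_def remb_def by (auto simp: a_def b_def)
  ultimately show "continuous_on {fv (lo e)..fv (hi e)} (\<lambda>h. nu lo hi fv w (remb lo hi fv e h))"
    unfolding a_def[symmetric] b_def[symmetric] using continuous_on_eq by (metis (no_types, lifting))
qed

lemma mu_cont:
  assumes m: "mgraph V E lo hi fv"
  shows "continuous_map (rtop V E lo hi fv) euclideanreal (mu lo hi fv e0)"
proof (rule rtop_cont_real[OF m])
  fix e assume e: "e \<in> E"
  define a where "a = fv (lo e)"
  define b where "b = fv (hi e)"
  have ab: "a < b" using m e unfolding mgraph_def a_def b_def by auto
  let ?G = "\<lambda>h. (if e = e0 then 1 else 0) * ((h - a) * (b - h))"
  have "continuous_on {a..b} ?G" by (intro continuous_intros)
  moreover have "mu lo hi fv e0 (remb lo hi fv e h) = ?G h" if "h \<in> {a..b}" for h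
    using ab that unfolding mu_def remb_def by (auto simp: a_def b_def)
  ultimately show "continuous_on {fv (lo e)..fv (hi e)} (\<lambda>h. mu lo hi fv e0 (remb lo hi fv e h))"
    unfolding a_def[symmetric] b_def[symmetric] using continuous_on_eq by (metis (no_types, lifting))
qed

lemma rtop_haus:
  assumes m: "mgraph V E lo hi fv"
  shows "Hausdorff_space (rtop V E lo hi fv)"
proof (rule haus_sep)
  fix x y assume x: "x \<in> topspace (rtop V E lo hi fv)" and y: "y \<in> topspace (rtop V E lo hi fv)" and xy: "x \<noteq> y"
  have ok: "\<exists>u. continuous_map (rtop V E lo hi fv) euclideanreal u \<and> u x \<noteq> u y"
    if "nu lo hi fv w x \<noteq> nu lo hi fv w y \<or> mu lo hi fv w x \<noteq> mu lo hi fv w y" for w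
    using that nu_cont[OF m] mu_cont[OF m] by blast
  have pos: "(h - fv (lo e)) * (fv (hi e) - h) > 0" if "fv (lo e) < h" "h < fv (hi e)" for e h
    using that by (simp add: mult_pos_pos)
  have xs: "x \<in> rpoints V E lo hi fv" and ys: "y \<in> rpoints V E lo hi fv" using x y rtop_space[OF m] by auto
  show "\<exists>u. continuous_map (rtop V E lo hi fv) euclideanreal u \<and> u x \<noteq> u y"
  proof (cases x)
    case (Nd w)
    show ?thesis
    proof (cases y)
      case (Nd w')
      then have "nu lo hi fv w x \<noteq> nu lo hi fv w y" using xy \<open>x = Nd w\<close> unfolding nu_def by auto
      then show ?thesis using ok by blast
    next
      case (Ed e h)
      then have "fv (lo e) < h" "h < fv (hi e)" using ys unfolding rpoints_def by auto
      then have "mu lo hi fv e x \<noteq> mu lo hi fv e y" using pos[of e h] \<open>x = Nd w\<close> Ed unfolding mu_def by auto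
      then show ?thesis using ok by blast
    qed
  next
    case (Ed e h)
    then have eh: "fv (lo e) < h" "h < fv (hi e)" "e \<in> E" using xs unfolding rpoints_def by auto
    show ?thesis
    proof (cases y)
      case (Nd w')
      then have "mu lo hi fv e x \<noteq> mu lo hi fv e y" using pos[of e h] eh \<open>x = Ed e h\<close> unfolding mu_def by auto
      then show ?thesis using ok by blast
    next
      case (Ed e' h')
      then have eh': "fv (lo e') < h'" "h' < fv (hi e')" using ys unfolding rpoints_def by auto
      show ?thesis
      proof (cases "e = e'")
        case False
        then have "mu lo hi fv e x \<noteq> mu lo hi fv e y" using pos[of e h] eh \<open>x = Ed e h\<close> Ed unfolding mu_def by auto
        then show ?thesis using ok by blast
      next
        case True
        then have hh: "h \<noteq> h'" using xy \<open>x = Ed e h\<close> Ed by auto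
        have ne: "lo e \<noteq> hi e" using eh by auto
        have "nu lo hi fv (lo e) x \<noteq> nu lo hi fv (lo e) y"
          using hh ne eh True \<open>x = Ed e h\<close> Ed unfolding nu_def by (auto simp: divide_simps)
        then show ?thesis using ok by blast
      qed
    qed
  qed
qed

lemma rfun_cont:
  assumes m: "mgraph V E lo hi fv"
  shows "continuous_map (rtop V E lo hi fv) euclideanreal (rfun fv)"
proof (rule rtop_cont_real[OF m])
  fix e assume e: "e \<in> E"
  have "continuous_on {fv (lo e)..fv (hi e)} (\<lambda>h. h)" by (rule continuous_on_id)
  moreover have "rfun fv (remb lo hi fv e h) = h" if "h \<in> {fv (lo e)..fv (hi e)}" for h
    using remb_in[OF m e that] by simp
  ultimately show "continuous_on {fv (lo e)..fv (hi e)} (\<lambda>h. rfun fv (remb lo hi fv e h))"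
    using continuous_on_eq by (metis (no_types, lifting))
qed

lemma reeb_props:
  assumes "is_reeb_graph X f"
  shows "compact_space X" "Hausdorff_space X" "continuous_map X euclideanreal f"
proof -
  obtain V E lo hi fv h where m: "mgraph V E lo hi fv" and hm: "homeomorphic_map (rtop V E lo hi fv) X h"
    and hf: "\<forall>p\<in>rpoints V E lo hi fv. f (h p) = rfun fv p"
    using assms unfolding is_reeb_graph_def by metis
  have hs: "rtop V E lo hi fv homeomorphic_space X" by (rule homeomorphic_map_imp_homeomorphic_space[OF hm])
  show "compact_space X" using homeomorphic_compact_space[OF hs] rtop_compact[OF m] by simp
  show "Hausdorff_space X" using homeomorphic_Hausdorff_space[OF hs] rtop_haus[OF m] by simp
  obtain g where g: "homeomorphic_maps (rtop V E lo hi fv) X h g" using hm homeomorphic_map_maps by metis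
  then have gc: "continuous_map X (rtop V E lo hi fv) g" and hg: "\<forall>y\<in>topspace X. h (g y) = y"
    unfolding homeomorphic_maps_def by auto
  have "continuous_map X euclideanreal (rfun fv \<circ> g)" by (rule continuous_map_compose[OF gc rfun_cont[OF m]])
  moreover have "(rfun fv \<circ> g) y = f y" if "y \<in> topspace X" for y
  proof -
    have "g y \<in> rpoints V E lo hi fv" using gc that rtop_space[OF m] unfolding continuous_map_def by auto
    then show ?thesis using hf hg that by auto
  qed
  ultimately show "continuous_map X euclideanreal f" using continuous_map_eq by metis
qed




lemma mm_lem:
  fixes h :: "real \<Rightarrow> real"
  assumes eps: "e \<ge> 0"
    and mon: "mono_on {0..1} h \<or> antimono_on {0..1} h"
    and le1: "\<forall>t\<in>{0..1}. h t \<le> h 1"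
    and ht: "(SUP t\<in>{0..1}. h t) - (INF t\<in>{0..1}. h t) \<le> 2*e"
    and t: "t \<in> {0..1}"
  shows "h 0 \<le> h t \<and> h t \<le> h 0 + 2*e"
  using mon
proof
  assume m: "mono_on {0..1} h"
  have a: "h 0 \<le> h s" "h s \<le> h 1" if "s \<in> {0..1}" for s
    using mono_onD[OF m, of 0 s] mono_onD[OF m, of s 1] that by auto
  have "(SUP t\<in>{0..1}. h t) = h 1" by (rule cSup_eq_maximum) (use a in auto)
  moreover have "(INF t\<in>{0..1}. h t) = h 0" by (rule cInf_eq_minimum) (use a in auto)
  ultimately show ?thesis using a[OF t] ht by auto
next
  assume m: "antimono_on {0..1} h"
  have a: "h s \<le> h 0" "h 1 \<le> h s" if "s \<in> {0..1}" for s
    using monotone_onD[OF m, of 0 s] monotone_onD[OF m, of s 1] that by auto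
  have "h 0 = h 1" using a(1)[of 1] le1[rule_format, of 0] by auto
  moreover have "h t = h 1" using a(2)[OF t] le1[rule_format, OF t] by auto
  ultimately show ?thesis using eps by auto
qed

lemma mp_lem:
  fixes h :: "real \<Rightarrow> real"
  assumes eps: "e \<ge> 0"
    and mon: "mono_on {0..1} h \<or> antimono_on {0..1} h"
    and le1: "\<forall>t\<in>{0..1}. h 1 \<le> h t"
    and ht: "(SUP t\<in>{0..1}. h t) - (INF t\<in>{0..1}. h t) \<le> 2*e"
    and t: "t \<in> {0..1}"
  shows "h 0 - 2*e \<le> h t \<and> h t \<le> h 0"
  using mon
proof
  assume m: "mono_on {0..1} h"
  have a: "h 0 \<le> h s" "h s \<le> h 1" if "s \<in> {0..1}" for s
    using mono_onD[OF m, of 0 s] mono_onD[OF m, of s 1] that by auto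
  have "h 0 = h 1" using a(2)[of 0] le1[rule_format, of 0] by auto
  moreover have "h t = h 1" using a(2)[OF t] le1[rule_format, OF t] by auto
  ultimately show ?thesis using eps by auto
next
  assume m: "antimono_on {0..1} h"
  have a: "h s \<le> h 0" "h 1 \<le> h s" if "s \<in> {0..1}" for s
    using monotone_onD[OF m, of 0 s] monotone_onD[OF m, of s 1] that by auto
  have "(SUP t\<in>{0..1}. h t) = h 0" by (rule cSup_eq_maximum) (use a in auto)
  moreover have "(INF t\<in>{0..1}. h t) = h 1" by (rule cInf_eq_minimum) (use a in auto)
  ultimately show ?thesis using a[OF t] ht by auto
qed




lemma main_gen:
  assumes cs: "compact_space X2" and hs: "Hausdorff_space X2"
    and cf: "continuous_map X2 euclideanreal f2" and eps: "\<epsilon> \<ge> 0"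
    and phc: "continuous_map X1 (sm_top X2 f2 \<epsilon>) \<phi>"
    and phf: "\<forall>x\<in>topspace X1. sm_fun f2 (\<phi> x) = f1 x"
    and v: "v \<in> topspace X1" and t0: "t0 \<in> {-\<epsilon>..\<epsilon>}"
    and z: "z \<in> topspace (sm_top X2 f2 \<epsilon>)"
    and g: "pathin (sm_top X2 f2 \<epsilon>) g" "g 0 = \<phi> v" "g 1 = z"
    and grng: "\<forall>\<tau>\<in>{0..1}. f1 v + t0 - \<epsilon> \<le> sm_fun f2 (g \<tau>) \<and> sm_fun f2 (g \<tau>) \<le> f1 v + t0 + \<epsilon>"
  shows "sm_map X2 f2 \<epsilon> \<epsilon> \<phi> (sm_pi X1 f1 \<epsilon> (v, t0)) \<in> Pset X2 f2 \<epsilon> z"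
proof -
  define c where "c = f1 v + t0"
  define T1 where "T1 = thick_top X1 \<epsilon>"
  define F1 where "F1 = thick_fun f1"
  define K1 where "K1 = sm_pi X1 f1 \<epsilon> (v, t0)"
  define Y where "Y = sm_top X2 f2 \<epsilon>"
  have K1d: "K1 = reeb_cls T1 F1 (v, t0)" unfolding K1_def sm_pi_def T1_def F1_def ..
  have vt: "(v, t0) \<in> topspace T1" unfolding T1_def thick_space using v t0 by simp
  have vK: "(v, t0) \<in> K1" unfolding K1d using vt by (rule rc_self)
  have K1prop: "x' \<in> topspace X1 \<and> t' \<in> {-\<epsilon>..\<epsilon>} \<and> f1 x' + t' = c" if "(x', t') \<in> K1" for x' t'
  proof -
    have "(x', t') \<in> {q \<in> topspace T1. F1 q = F1 (v, t0)}" using that rc_sub[of T1 F1 "(v,t0)"] unfolding K1d by auto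
    then show ?thesis unfolding T1_def thick_space F1_def thick_fun_def c_def by auto
  qed
  obtain x t where xt: "(SOME xt. xt \<in> K1) = (x, t)" by (cases "SOME xt. xt \<in> K1") auto
  have xtK: "(x, t) \<in> K1" using someI[of "\<lambda>xt. xt \<in> K1", OF vK] xt by simp
  have xprop: "x \<in> topspace X1" "t \<in> {-\<epsilon>..\<epsilon>}" "f1 x + t = c" using K1prop[OF xtK] by auto
  have phY: "\<phi> x' \<in> topspace Y" if "x' \<in> topspace X1" for x'
    using phc that unfolding Y_def continuous_map_def by auto
  have Yd: "Y = reeb_top (thick_top X2 \<epsilon>) (thick_fun f2)" unfolding Y_def sm_top_def ..
  have ne: "\<exists>p. p \<in> a" if aY: "a \<in> topspace Y" for a
  proof -
    obtain r where "r \<in> topspace (thick_top X2 \<epsilon>)" "a = reeb_cls (thick_top X2 \<epsilon>) (thick_fun f2) r"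
      using aY unfolding Yd reeb_top_space by auto
    then have "r \<in> a" using rc_self[of r "thick_top X2 \<epsilon>" "thick_fun f2"] by simp
    then show ?thesis by (rule exI)
  qed
  have smf: "sm_fun f2 a = f2 (fst p) + snd p" if "a \<in> topspace Y" "p \<in> a" for a p
    using cls_facts(3)[of a "thick_top X2 \<epsilon>" "thick_fun f2" p] that unfolding Yd sm_fun_def thick_fun_def
    by (simp add: case_prod_beta)
  obtain y s where ys: "(SOME ys. ys \<in> \<phi> x) = (y, s)" by (cases "SOME ys. ys \<in> \<phi> x") auto
  have ysP: "(y, s) \<in> \<phi> x" using someI_ex[OF ne[OF phY[OF xprop(1)]]] ys by simp
  have "sm_fun f2 (\<phi> x) = f2 y + s" using smf[OF phY[OF xprop(1)] ysP] by simp
  moreover have "sm_fun f2 (\<phi> x) = f1 x" using phf xprop(1) by blast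
  ultimately have st: "s + t = c - f2 y" using xprop(3) by linarith
  have smap: "sm_map X2 f2 \<epsilon> \<epsilon> \<phi> K1 = sm_pi X2 f2 (2*\<epsilon>) (y, c - f2 y)"
  proof -
    have "sm_map X2 f2 \<epsilon> \<epsilon> \<phi> K1 = sm_pi X2 f2 (\<epsilon> + \<epsilon>) (y, s + t)"
      unfolding sm_map_def xt Let_def by (simp add: ys)
    moreover have "\<epsilon> + \<epsilon> = 2 * \<epsilon>" by simp
    ultimately show ?thesis using st by metis
  qed
  define A where "A = \<phi> ` fst ` K1 \<union> g ` {0..1}"
  have Ac: "connectedin Y A"
  proof -
    have "connectedin T1 K1" unfolding K1d by (rule rc_conn)
    then have "connectedin X1 (fst ` K1)"
      unfolding T1_def thick_top_def by (rule connectedin_continuous_map_image[OF continuous_map_fst])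
    then have 1: "connectedin Y (\<phi> ` fst ` K1)" unfolding Y_def by (rule connectedin_continuous_map_image[OF phc])
    have 2: "connectedin Y (g ` {0..1})" unfolding Y_def by (rule connectedin_path_image[OF g(1)])
    have "\<phi> v \<in> \<phi> ` fst ` K1" using vK by force
    moreover have "\<phi> v \<in> g ` {0..1}" using g(2) by force
    ultimately have "\<phi> v \<in> \<phi> ` fst ` K1 \<inter> g ` {0..1}" by (rule IntI)
    then have "\<phi> ` fst ` K1 \<inter> g ` {0..1} \<noteq> {}" by (metis empty_iff)
    then show ?thesis unfolding A_def by (rule connectedin_Un[OF 1 2])
  qed
  have Arng: "\<forall>a\<in>A. c - \<epsilon> \<le> sm_fun f2 a \<and> sm_fun f2 a \<le> c + \<epsilon>"
  proof
    fix a assume "a \<in> A"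
    then consider x' t' where "(x', t') \<in> K1" "a = \<phi> x'" | \<tau> where "\<tau> \<in> {0..1}" "a = g \<tau>"
      unfolding A_def by auto
    then show "c - \<epsilon> \<le> sm_fun f2 a \<and> sm_fun f2 a \<le> c + \<epsilon>"
    proof cases
      case 1
      then show ?thesis using K1prop[OF 1(1)] phf by auto
    next
      case 2
      then show ?thesis using grng unfolding c_def by auto
    qed
  qed
  obtain q where qz: "q \<in> z" using ne z unfolding Y_def by metis
  have xA: "\<phi> x \<in> A" unfolding A_def using xtK by force
  have zA: "z \<in> A" unfolding A_def using g(3) by force
  have eq: "sm_pi X2 f2 (2*\<epsilon>) (fst (y, s), c - f2 (fst (y, s))) = sm_pi X2 f2 (2*\<epsilon>) (fst q, c - f2 (fst q))"
    by (rule core[OF cs hs cf eps Ac[unfolded Y_def] Arng xA ysP zA qz])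
  have zY: "z \<in> topspace Y" using z unfolding Y_def .
  have zf: "sm_fun f2 z = f2 (fst q) + snd q" by (rule smf[OF zY qz])
  have "c - \<epsilon> \<le> sm_fun f2 z \<and> sm_fun f2 z \<le> c + \<epsilon>" using Arng zA by simp
  then have tq: "c - f2 (fst q) - snd q \<in> {-\<epsilon>..\<epsilon>}" using zf by auto
  have "sm_pi X2 f2 (2*\<epsilon>) (fst q, snd q + (c - f2 (fst q) - snd q)) \<in> Pset X2 f2 \<epsilon> z"
    unfolding Pset_def mem_Collect_eq
    by (rule exI[of _ "fst q"], rule exI[of _ "snd q"], rule exI[of _ "c - f2 (fst q) - snd q"]) (use qz tq in simp)
  then show ?thesis using eq smap unfolding K1_def by simp
qed

theorem lemma1:
  fixes X1 :: "'a topology" and f1 :: "'a \<Rightarrow> real"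
    and X2 :: "'b topology" and f2 :: "'b \<Rightarrow> real"
    and \<epsilon> :: real
    and \<phi> :: "'a \<Rightarrow> ('b \<times> real) set" and \<psi> :: "'b \<Rightarrow> ('a \<times> real) set"
  assumes R1: "is_reeb_graph X1 f1" and R2: "is_reeb_graph X2 f2"
    and eps: "\<epsilon> \<ge> 0"
    and il: "interleaving X1 f1 X2 f2 \<epsilon> \<phi> \<psi>"
  shows
   "(\<forall>v z. split_or_max X1 f1 v \<and> split_or_max (sm_top X2 f2 \<epsilon>) (sm_fun f2) z \<and>
        \<phi> v \<in> Mminus (sm_top X2 f2 \<epsilon>) (sm_fun f2) \<epsilon> z
      \<longrightarrow> sm_map X2 f2 \<epsilon> \<epsilon> \<phi> (s_up X1 f1 \<epsilon> v) \<in> Pset X2 f2 \<epsilon> z) \<and>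
    (\<forall>v z. join_or_min X1 f1 v \<and> join_or_min (sm_top X2 f2 \<epsilon>) (sm_fun f2) z \<and>
        \<phi> v \<in> Mplus (sm_top X2 f2 \<epsilon>) (sm_fun f2) \<epsilon> z
      \<longrightarrow> sm_map X2 f2 \<epsilon> \<epsilon> \<phi> (s_down X1 f1 \<epsilon> v) \<in> Pset X2 f2 \<epsilon> z)"
proof -
  have cs: "compact_space X2" and hs: "Hausdorff_space X2" and cf: "continuous_map X2 euclideanreal f2"
    using reeb_props[OF R2] by auto
  have phc: "continuous_map X1 (sm_top X2 f2 \<epsilon>) \<phi>" and phf: "\<forall>x\<in>topspace X1. sm_fun f2 (\<phi> x) = f1 x"
    using il unfolding interleaving_def reeb_morphism_def by auto
  have P1: "sm_map X2 f2 \<epsilon> \<epsilon> \<phi> (s_up X1 f1 \<epsilon> v) \<in> Pset X2 f2 \<epsilon> z"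
    if H: "split_or_max X1 f1 v \<and> split_or_max (sm_top X2 f2 \<epsilon>) (sm_fun f2) z \<and>
        \<phi> v \<in> Mminus (sm_top X2 f2 \<epsilon>) (sm_fun f2) \<epsilon> z" for v z
  proof -
    have v: "v \<in> topspace X1" and z: "z \<in> topspace (sm_top X2 f2 \<epsilon>)"
      using H unfolding split_or_max_def by auto
    obtain g where g: "monotone_path (sm_top X2 f2 \<epsilon>) (sm_fun f2) g" "g 0 = \<phi> v" "g 1 = z"
      "path_height (sm_fun f2) g \<le> 2*\<epsilon>" "\<forall>t\<in>{0..1}. sm_fun f2 (g t) \<le> sm_fun f2 z"
      using H unfolding Mminus_def by blast
    have pg: "pathin (sm_top X2 f2 \<epsilon>) g" using g(1) unfolding monotone_path_def by simp
    have mon: "mono_on {0..1} (\<lambda>t. sm_fun f2 (g t)) \<or> antimono_on {0..1} (\<lambda>t. sm_fun f2 (g t))"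
      using g(1) unfolding monotone_path_def o_def by simp
    have le1: "\<forall>t\<in>{0..1}. sm_fun f2 (g t) \<le> sm_fun f2 (g 1)" using g(3,5) by simp
    have ht: "(SUP t\<in>{0..1}. sm_fun f2 (g t)) - (INF t\<in>{0..1}. sm_fun f2 (g t)) \<le> 2*\<epsilon>"
      using g(4) unfolding path_height_def .
    have g0: "sm_fun f2 (g 0) = f1 v" using g(2) phf v by simp
    have grng: "\<forall>\<tau>\<in>{0..1}. f1 v + \<epsilon> - \<epsilon> \<le> sm_fun f2 (g \<tau>) \<and> sm_fun f2 (g \<tau>) \<le> f1 v + \<epsilon> + \<epsilon>"
    proof
      fix \<tau> :: real assume "\<tau> \<in> {0..1}"
      then have "sm_fun f2 (g 0) \<le> sm_fun f2 (g \<tau>) \<and> sm_fun f2 (g \<tau>) \<le> sm_fun f2 (g 0) + 2*\<epsilon>"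
        by (rule mm_lem[OF eps mon le1 ht])
      then show "f1 v + \<epsilon> - \<epsilon> \<le> sm_fun f2 (g \<tau>) \<and> sm_fun f2 (g \<tau>) \<le> f1 v + \<epsilon> + \<epsilon>"
        using g0 by linarith
    qed
    have t0: "\<epsilon> \<in> {-\<epsilon>..\<epsilon>}" using eps by simp
    show ?thesis unfolding s_up_def
      by (rule main_gen[OF cs hs cf eps phc phf v t0 z pg g(2) g(3) grng])
  qed
  have P2: "sm_map X2 f2 \<epsilon> \<epsilon> \<phi> (s_down X1 f1 \<epsilon> v) \<in> Pset X2 f2 \<epsilon> z"
    if H: "join_or_min X1 f1 v \<and> join_or_min (sm_top X2 f2 \<epsilon>) (sm_fun f2) z \<and>
        \<phi> v \<in> Mplus (sm_top X2 f2 \<epsilon>) (sm_fun f2) \<epsilon> z" for v z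
  proof -
    have v: "v \<in> topspace X1" and z: "z \<in> topspace (sm_top X2 f2 \<epsilon>)"
      using H unfolding join_or_min_def by auto
    obtain g where g: "monotone_path (sm_top X2 f2 \<epsilon>) (sm_fun f2) g" "g 0 = \<phi> v" "g 1 = z"
      "path_height (sm_fun f2) g \<le> 2*\<epsilon>" "\<forall>t\<in>{0..1}. sm_fun f2 z \<le> sm_fun f2 (g t)"
      using H unfolding Mplus_def by blast
    have pg: "pathin (sm_top X2 f2 \<epsilon>) g" using g(1) unfolding monotone_path_def by simp
    have mon: "mono_on {0..1} (\<lambda>t. sm_fun f2 (g t)) \<or> antimono_on {0..1} (\<lambda>t. sm_fun f2 (g t))"
      using g(1) unfolding monotone_path_def o_def by simp
    have le1: "\<forall>t\<in>{0..1}. sm_fun f2 (g 1) \<le> sm_fun f2 (g t)" using g(3,5) by simp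
    have ht: "(SUP t\<in>{0..1}. sm_fun f2 (g t)) - (INF t\<in>{0..1}. sm_fun f2 (g t)) \<le> 2*\<epsilon>"
      using g(4) unfolding path_height_def .
    have g0: "sm_fun f2 (g 0) = f1 v" using g(2) phf v by simp
    have grng: "\<forall>\<tau>\<in>{0..1}. f1 v + - \<epsilon> - \<epsilon> \<le> sm_fun f2 (g \<tau>) \<and> sm_fun f2 (g \<tau>) \<le> f1 v + - \<epsilon> + \<epsilon>"
    proof
      fix \<tau> :: real assume "\<tau> \<in> {0..1}"
      then have "sm_fun f2 (g 0) - 2*\<epsilon> \<le> sm_fun f2 (g \<tau>) \<and> sm_fun f2 (g \<tau>) \<le> sm_fun f2 (g 0)"
        by (rule mp_lem[OF eps mon le1 ht])
      then show "f1 v + - \<epsilon> - \<epsilon> \<le> sm_fun f2 (g \<tau>) \<and> sm_fun f2 (g \<tau>) \<le> f1 v + - \<epsilon> + \<epsilon>"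
        using g0 by linarith
    qed
    have t0: "-\<epsilon> \<in> {-\<epsilon>..\<epsilon>}" using eps by simp
    show ?thesis unfolding s_down_def
      by (rule main_gen[OF cs hs cf eps phc phf v t0 z pg g(2) g(3) grng])
  qed
  show ?thesis using P1 P2 by blast
qed


end
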